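(* Let $\mathfrak A$ be a pseudo left Hilbert algebra. Then $\mathfrak A^2=\mathrm{span}\{\xi\eta:\xi,\eta\in\mathfrak A\}$, with the restricted product, involution and inner product, is a left Hilbert algebra. Moreover, for all $\xi\in\mathfrak A$ and $\eta\in(\mathfrak A^2)^\perp$ (orthogonal complement in $\overline{\mathfrak A}$) one has $\xi\eta:=\pi_l(\xi)\eta=0$; and if in addition $\eta\in\mathfrak A$, then also $\eta\xi=0$.
   Context: Inner products are linear in the second variable. A pseudo left Hilbert algebra is a complex associative algebra $\mathfrak A$ with an antilinear involution $S:\mathfrak A\to\mathfrak A$ ($S^2=\mathrm{id}$, $S(\xi\eta)=S(\eta)S(\xi)$) and an inner product $\langle\cdot,\cdot\rangle$ such that: (1) for each $\xi\in\mathfrak A$ the left multiplication $\pi_l(\xi):\eta\mapsto\xi\eta$ is bounded; (2) $\langle\xi\eta,\zeta\rangle=\langle\eta,(S\xi)\zeta\rangle$ for all $\xi,\eta,\zeta\in\mathfrak A$; (3) $S$ is closable as an operator on the Hilbert space completion $\overline{\mathfrak A}$. It is a left Hilbert algebra if moreover $\mathfrak A^2=\mathrm{span}\{\xi\eta:\xi,\eta\in\mathfrak A\}$ is dense in $\overline{\mathfrak A}$. The closure of $S$ is again denoted $S$, with domain $D(S)$; $\pi_l(\xi)$ also denotes the bounded extension to $\overline{\mathfrak A}$. *)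

theory Defs
  imports "HOL-Analysis.Analysis"
begin

text \<open>Completeness comes from the class banach.\<close>
definition complex_hilbert :: "(complex \<Rightarrow> 'h::banach \<Rightarrow> 'h) \<Rightarrow> ('h \<Rightarrow> 'h \<Rightarrow> complex) \<Rightarrow> bool" where
  "complex_hilbert sc ip \<longleftrightarrow>
     vector_space sc \<and>
     (\<forall>r x. sc (complex_of_real r) x = r *\<^sub>R x) \<and>
     (\<forall>x y z. ip x (y + z) = ip x y + ip x z) \<and>
     (\<forall>c x y. ip x (sc c y) = c * ip x y) \<and>
     (\<forall>x y. ip y x = cnj (ip x y)) \<and>
     (\<forall>x. ip x x = complex_of_real ((norm x)\<^sup>2))"

definition closable_on :: "'h::real_normed_vector set \<Rightarrow> ('h \<Rightarrow> 'h) \<Rightarrow> bool" where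
  "closable_on A S \<longleftrightarrow>
     (\<forall>x y z. (x, y) \<in> closure ((\<lambda>a. (a, S a)) ` A) \<and> (x, z) \<in> closure ((\<lambda>a. (a, S a)) ` A)
        \<longrightarrow> y = z)"

text \<open>A pseudo left Hilbert algebra: the algebra is the complex subspace A of the Hilbert
  space 'h; its Hilbert space completion is closure A (a closed subspace of 'h).
  The product mul and the involution S only matter on A.\<close>
definition pseudo_left_hilbert_algebra ::
  "(complex \<Rightarrow> 'h::banach \<Rightarrow> 'h) \<Rightarrow> ('h \<Rightarrow> 'h \<Rightarrow> complex) \<Rightarrow> ('h \<Rightarrow> 'h \<Rightarrow> 'h) \<Rightarrow> ('h \<Rightarrow> 'h) \<Rightarrow> 'h set \<Rightarrow> bool" where
  "pseudo_left_hilbert_algebra sc ip mul S A \<longleftrightarrow>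
     complex_hilbert sc ip \<and>
     module.subspace sc A \<and>
     \<comment> \<open>complex associative algebra structure on A\<close>
     (\<forall>x\<in>A. \<forall>y\<in>A. mul x y \<in> A) \<and>
     (\<forall>x\<in>A. \<forall>y\<in>A. \<forall>z\<in>A. mul (mul x y) z = mul x (mul y z)) \<and>
     (\<forall>x\<in>A. \<forall>y\<in>A. \<forall>z\<in>A. mul (x + y) z = mul x z + mul y z \<and> mul x (y + z) = mul x y + mul x z) \<and>
     (\<forall>c. \<forall>x\<in>A. \<forall>y\<in>A. mul (sc c x) y = sc c (mul x y) \<and> mul x (sc c y) = sc c (mul x y)) \<and>
     \<comment> \<open>antilinear involutive anti-multiplicative S on A\<close>
     (\<forall>x\<in>A. S x \<in> A \<and> S (S x) = x) \<and>
     (\<forall>x\<in>A. \<forall>y\<in>A. S (x + y) = S x + S y) \<and>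
     (\<forall>c. \<forall>x\<in>A. S (sc c x) = sc (cnj c) (S x)) \<and>
     (\<forall>x\<in>A. \<forall>y\<in>A. S (mul x y) = mul (S y) (S x)) \<and>
     \<comment> \<open>(1) left multiplications are bounded\<close>
     (\<forall>x\<in>A. \<exists>K. \<forall>y\<in>A. norm (mul x y) \<le> K * norm y) \<and>
     \<comment> \<open>(2)\<close>
     (\<forall>x\<in>A. \<forall>y\<in>A. \<forall>z\<in>A. ip (mul x y) z = ip y (mul (S x) z)) \<and>
     \<comment> \<open>(3) S closable\<close>
     closable_on A S"

definition alg_square :: "(complex \<Rightarrow> 'h::banach \<Rightarrow> 'h) \<Rightarrow> ('h \<Rightarrow> 'h \<Rightarrow> 'h) \<Rightarrow> 'h set \<Rightarrow> 'h set" where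
  "alg_square sc mul A = module.span sc {mul x y | x y. x \<in> A \<and> y \<in> A}"

definition left_hilbert_algebra ::
  "(complex \<Rightarrow> 'h::banach \<Rightarrow> 'h) \<Rightarrow> ('h \<Rightarrow> 'h \<Rightarrow> complex) \<Rightarrow> ('h \<Rightarrow> 'h \<Rightarrow> 'h) \<Rightarrow> ('h \<Rightarrow> 'h) \<Rightarrow> 'h set \<Rightarrow> bool" where
  "left_hilbert_algebra sc ip mul S A \<longleftrightarrow>
     pseudo_left_hilbert_algebra sc ip mul S A \<and> closure A \<subseteq> closure (alg_square sc mul A)"

text \<open>The bounded extension pi_l(x) of left multiplication by x to the completion closure A,
  evaluated at eta: the common limit of x s_n for sequences s_n in A converging to eta.\<close>
definition left_mult_ext :: "('h::real_normed_vector \<Rightarrow> 'h \<Rightarrow> 'h) \<Rightarrow> 'h set \<Rightarrow> 'h \<Rightarrow> 'h \<Rightarrow> 'h" where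
  "left_mult_ext mul A x eta =
     (THE z. \<forall>s. (\<forall>n. s n \<in> A) \<and> s \<longlonglongrightarrow> eta \<longrightarrow> (\<lambda>n. mul x (s n)) \<longlonglongrightarrow> z)"

end

theory Submission
  imports Defs
begin


locale chs =
  fixes sc :: "complex \<Rightarrow> 'h::banach \<Rightarrow> 'h" and ip :: "'h \<Rightarrow> 'h \<Rightarrow> complex"
  assumes CH: "complex_hilbert sc ip"
begin

lemma vs: "vector_space sc" using CH unfolding complex_hilbert_def by blast

sublocale V: vector_space sc by (rule vs)

lemma sc_real: "sc (complex_of_real r) x = r *\<^sub>R x" using CH unfolding complex_hilbert_def by blast
lemma ip_add_right: "ip x (y + z) = ip x y + ip x z" using CH unfolding complex_hilbert_def by blast
lemma ip_sc_right: "ip x (sc c y) = c * ip x y" using CH unfolding complex_hilbert_def by blast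
lemma ip_sym: "ip y x = cnj (ip x y)" using CH unfolding complex_hilbert_def by blast
lemma ip_self: "ip x x = complex_of_real ((norm x)\<^sup>2)" using CH unfolding complex_hilbert_def by blast

lemma ip_add_left: "ip (x + y) z = ip x z + ip y z"
  by (metis ip_sym ip_add_right complex_cnj_add)
lemma ip_sc_left: "ip (sc c x) y = cnj c * ip x y"
  by (metis ip_sym ip_sc_right complex_cnj_mult)
lemma ip_zero_right[simp]: "ip x 0 = 0"
  using ip_add_right[of x 0 0] by simp
lemma ip_zero_left[simp]: "ip 0 x = 0"
  using ip_add_left[of 0 0 x] by simp
lemma ip_minus_right: "ip x (- y) = - ip x y"
  using ip_add_right[of x y "-y"] by (simp add: eq_neg_iff_add_eq_0 add.commute)
lemma ip_minus_left: "ip (- x) y = - ip x y"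
  using ip_add_left[of x "-x" y] by (simp add: eq_neg_iff_add_eq_0 add.commute)
lemma ip_diff_right: "ip x (y - z) = ip x y - ip x z"
  using ip_add_right[of x y "-z"] ip_minus_right by simp
lemma ip_diff_left: "ip (x - y) z = ip x z - ip y z"
  using ip_add_left[of x "-y" z] ip_minus_left by simp
lemma ip_scaleR_left: "ip (r *\<^sub>R x) y = r * ip x y"
  using ip_sc_left[of "complex_of_real r" x y] sc_real by simp
lemma ip_scaleR_right: "ip x (r *\<^sub>R y) = r * ip x y"
  using ip_sc_right[of x "complex_of_real r" y] sc_real by simp

lemma norm_sq_add: "(norm (u + (v::'h)))\<^sup>2 = (norm u)\<^sup>2 + (norm v)\<^sup>2 + 2 * Re (ip u v)"
proof -
  have "complex_of_real ((norm (u+v))\<^sup>2) = ip (u+v) (u+v)" by (simp add: ip_self)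
  also have "\<dots> = ip u u + ip v v + (ip u v + cnj (ip u v))"
    by (simp add: ip_add_left ip_add_right ip_sym[of u v])
  finally have "complex_of_real ((norm (u+v))\<^sup>2) = ip u u + ip v v + (ip u v + cnj (ip u v))" .
  hence "Re (complex_of_real ((norm (u+v))\<^sup>2)) = Re (ip u u + ip v v + (ip u v + cnj (ip u v)))" by simp
  thus ?thesis by (simp add: ip_self)
qed

lemma parallelogram: "(norm (u + (v::'h)))\<^sup>2 + (norm (u - v))\<^sup>2 = 2 * (norm u)\<^sup>2 + 2 * (norm v)\<^sup>2"
  using norm_sq_add[of u v] norm_sq_add[of u "-v"] by (simp add: ip_minus_right)

lemma Re_CS: "Re (ip x (y::'h)) \<le> norm x * norm y"
proof (cases "norm x * norm y = 0")
  case True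
  then have "x = 0 \<or> y = 0" by simp
  then show ?thesis by auto
next
  case False
  hence pos: "norm x * norm y > 0" by (simp add: less_le)
  define a where "a = norm y *\<^sub>R x"
  define b where "b = - (norm x *\<^sub>R y)"
  have na: "norm a = norm y * norm x" by (simp add: a_def)
  have nb: "norm b = norm x * norm y" by (simp add: b_def)
  have rab: "Re (ip a b) = - (norm x * norm y) * Re (ip x y)"
    by (simp add: a_def b_def ip_minus_right ip_scaleR_left ip_scaleR_right)
  have "0 \<le> (norm (a + b))\<^sup>2" by simp
  also have "\<dots> = (norm y * norm x)\<^sup>2 + (norm x * norm y)\<^sup>2 - 2 * (norm x * norm y) * Re (ip x y)"
    using norm_sq_add[of a b] na nb rab by simp
  finally have "2 * (norm x * norm y) * Re (ip x y) \<le> 2 * (norm x * norm y) * (norm x * norm y)"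
    by (simp add: power2_eq_square algebra_simps)
  then show ?thesis using pos by (metis mult_le_cancel_left_pos zero_less_numeral mult_pos_pos)
qed

lemma norm_sc: "norm (sc c (x::'h)) = cmod c * norm x"
proof -
  have "complex_of_real ((norm (sc c x))\<^sup>2) = ip (sc c x) (sc c x)" by (simp only: ip_self)
  also have "\<dots> = cnj c * c * ip x x" by (simp add: ip_sc_left ip_sc_right)
  also have "\<dots> = cnj c * c * complex_of_real ((norm x)\<^sup>2)" by (simp only: ip_self)
  also have "\<dots> = complex_of_real ((cmod c * norm x)\<^sup>2)"
    using complex_norm_square[of c] by (simp add: power_mult_distrib mult.commute)
  finally have "(norm (sc c x))\<^sup>2 = (cmod c * norm x)\<^sup>2" by (simp only: of_real_eq_iff)
  thus ?thesis by (simp add: power2_eq_iff_nonneg)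
qed

lemma CS: "cmod (ip x (y::'h)) \<le> norm x * norm y"
proof (cases "ip x y = 0")
  case True then show ?thesis by simp
next
  case False
  define u where "u = cnj (ip x y) / complex_of_real (cmod (ip x y))"
  have cu: "cmod u = 1" using False by (simp add: u_def norm_divide)
  have "ip x (sc u y) = complex_of_real (cmod (ip x y))"
    proof -
    have "ip x (sc u y) = cnj (ip x y) * ip x y / complex_of_real (cmod (ip x y))"
      by (simp add: ip_sc_right u_def)
    also have "cnj (ip x y) * ip x y = complex_of_real (cmod (ip x y)) * complex_of_real (cmod (ip x y))"
    proof -
      have "cnj (ip x y) * ip x y = complex_of_real ((cmod (ip x y))\<^sup>2)"
        using complex_norm_square[of "ip x y"] by (simp only: mult.commute)
      thus ?thesis by (simp only: power2_eq_square of_real_mult)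
    qed
    finally show ?thesis using False by simp
  qed
  hence "cmod (ip x y) = Re (ip x (sc u y))" by simp
  also have "\<dots> \<le> norm x * norm (sc u y)" by (rule Re_CS)
  also have "\<dots> = norm x * norm y" by (simp add: norm_sc cu)
  finally show ?thesis .
qed

end



context chs begin

lemma orth_from_min:
  fixes r z :: 'h
  assumes "\<And>t. norm r \<le> norm (r - sc t z)"
  shows "ip z r = 0"
proof (rule ccontr)
  assume wne: "ip z r \<noteq> 0"
  define w where "w = ip z r"
  define \<epsilon> where "\<epsilon> = 1 / ((norm z)\<^sup>2 + 1)"
  have zp: "(norm z)\<^sup>2 + 1 > 0" by (metis add_nonneg_pos zero_le_power2 zero_less_one)
  have epos: "\<epsilon> > 0" using zp by (simp add: \<epsilon>_def)
  have elt: "\<epsilon> * (norm z)\<^sup>2 < 1" using zp by (simp add: \<epsilon>_def divide_less_eq)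
  define t where "t = complex_of_real \<epsilon> * w"
  have irz: "ip r z = cnj w" by (simp add: w_def ip_sym[of z r])
  have ww: "w * cnj w = complex_of_real ((cmod w)\<^sup>2)" by (rule complex_norm_square[symmetric])
  have ret: "Re (ip r (- sc t z)) = - \<epsilon> * (cmod w)\<^sup>2"
  proof -
    have "ip r (- sc t z) = - (complex_of_real \<epsilon> * (w * cnj w))"
      by (simp add: ip_minus_right ip_sc_right irz t_def mult.assoc)
    also have "\<dots> = - complex_of_real (\<epsilon> * (cmod w)\<^sup>2)" by (simp add: ww)
    finally show ?thesis by simp
  qed
  have nt: "norm (sc t z) = \<epsilon> * cmod w * norm z"
    using epos by (simp add: norm_sc t_def norm_mult)
  have "(norm r)\<^sup>2 \<le> (norm (r - sc t z))\<^sup>2"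
    using assms[of t] by (simp add: power_mono)
  also have "\<dots> = (norm r)\<^sup>2 + (\<epsilon> * cmod w * norm z)\<^sup>2 - 2 * \<epsilon> * (cmod w)\<^sup>2"
    using norm_sq_add[of r "- sc t z"] ret nt by simp
  finally have "2 * \<epsilon> * (cmod w)\<^sup>2 \<le> \<epsilon> * (cmod w)\<^sup>2 * (\<epsilon> * (norm z)\<^sup>2)"
    by (simp add: power_mult_distrib power2_eq_square algebra_simps)
  moreover have "\<epsilon> * (cmod w)\<^sup>2 > 0" using epos wne w_def by simp
  ultimately have "2 \<le> \<epsilon> * (norm z)\<^sup>2"
    by (metis mult.commute mult_le_cancel_left_pos mult_2 mult.assoc)
  with elt show False by simp
qed

lemma projection:
  assumes M: "V.subspace M"
  shows "\<exists>e p. (\<forall>n. e n \<in> M) \<and> e \<longlonglongrightarrow> p \<and> (\<forall>z\<in>M. ip z (d - p) = 0)"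
proof -
  define D where "D = (\<lambda>e. norm (d - e)) ` M"
  define \<delta> where "\<delta> = Inf D"
  have Dne: "D \<noteq> {}" using V.subspace_0[OF M] by (auto simp: D_def)
  have bdd: "bdd_below D" by (auto simp: D_def bdd_below_def intro!: exI[of _ 0])
  have low: "\<And>m. m \<in> M \<Longrightarrow> \<delta> \<le> norm (d - m)"
    unfolding \<delta>_def by (rule cInf_lower) (use bdd in \<open>auto simp: D_def\<close>)
  have dnn: "\<delta> \<ge> 0" unfolding \<delta>_def by (rule cInf_greatest[OF Dne]) (auto simp: D_def)
  have "\<forall>n. \<exists>m\<in>M. norm (d - m) < \<delta> + inverse (real (Suc n))"
  proof
    fix n
    have "Inf D < \<delta> + inverse (real (Suc n))" by (simp add: \<delta>_def)
    from cInf_lessD[OF Dne this] show "\<exists>m\<in>M. norm (d - m) < \<delta> + inverse (real (Suc n))"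
      by (auto simp: D_def)
  qed
  then obtain e where eM: "\<And>n. e n \<in> M" and ed: "\<And>n. norm (d - e n) < \<delta> + inverse (real (Suc n))"
    by metis
  define a where "a = (\<lambda>n. inverse (real (Suc n)))"
  have apos: "\<And>n. a n > 0" by (simp add: a_def)
  have amono: "\<And>m N. N \<le> m \<Longrightarrow> a m \<le> a N" by (simp add: a_def le_imp_inverse_le)
  have a1: "\<And>n. a n \<le> 1" by (simp add: a_def inverse_eq_divide divide_simps)
  have key: "(norm (e m - e n))\<^sup>2 \<le> 4 * a N * (2 * \<delta> + 1)" if "m \<ge> N" "n \<ge> N" for m n N
  proof -
    define u where "u = d - e n"
    define v where "v = d - e m"
    have mid: "(1/2) *\<^sub>R (e m + e n) \<in> M"
    proof -
      have "sc (complex_of_real (1/2)) (e m + e n) \<in> M" by (rule V.subspace_scale[OF M V.subspace_add[OF M eM eM]])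
      thus ?thesis by (simp only: sc_real)
    qed
    have uv: "u + v = 2 *\<^sub>R (d - (1/2) *\<^sub>R (e m + e n))"
      by (simp add: u_def v_def algebra_simps scaleR_2)
    have "norm (u + v) = 2 * norm (d - (1/2) *\<^sub>R (e m + e n))" by (simp add: uv)
    hence nuv: "2 * \<delta> \<le> norm (u + v)" using low[OF mid] by simp
    have "(2 * \<delta>)\<^sup>2 \<le> (norm (u + v))\<^sup>2" using nuv dnn by (intro power_mono) auto
    have u_le: "norm u \<le> \<delta> + a N" using ed[of n] amono[OF that(2)] unfolding u_def a_def by linarith
    have v_le: "norm v \<le> \<delta> + a N" using ed[of m] amono[OF that(1)] unfolding v_def a_def by linarith
    have "(norm u)\<^sup>2 \<le> (\<delta> + a N)\<^sup>2" using u_le by (simp add: power_mono)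
    moreover have "(norm v)\<^sup>2 \<le> (\<delta> + a N)\<^sup>2" using v_le by (simp add: power_mono)
    moreover have "(norm (u - v))\<^sup>2 = 2 * (norm u)\<^sup>2 + 2 * (norm v)\<^sup>2 - (norm (u + v))\<^sup>2"
      using parallelogram[of u v] by simp
    moreover have "u - v = e m - e n" by (simp add: u_def v_def)
    ultimately have "(norm (e m - e n))\<^sup>2 \<le> 4 * (\<delta> + a N)\<^sup>2 - 4 * \<delta>\<^sup>2"
      using \<open>(2 * \<delta>)\<^sup>2 \<le> (norm (u + v))\<^sup>2\<close> by (simp add: power_mult_distrib)
    also have "\<dots> = 4 * a N * (2 * \<delta> + a N)" by (simp add: power2_eq_square algebra_simps)
    also have "\<dots> \<le> 4 * a N * (2 * \<delta> + 1)" using apos[of N] a1[of N] by simp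
    finally show ?thesis .
  qed
  have "Cauchy e"
  proof (rule CauchyI)
    fix \<epsilon> :: real assume ep: "\<epsilon> > 0"
    have "\<epsilon>\<^sup>2 / (4 * (2 * \<delta> + 1)) > 0" using ep dnn by simp
    then obtain N where N: "a N < \<epsilon>\<^sup>2 / (4 * (2 * \<delta> + 1))"
      using reals_Archimedean unfolding a_def by blast
    have "4 * a N * (2 * \<delta> + 1) < \<epsilon>\<^sup>2" using N dnn by (simp add: field_simps)
    hence "\<forall>m\<ge>N. \<forall>n\<ge>N. norm (e m - e n) < \<epsilon>"
      using key ep by (meson order.strict_trans1 power2_less_imp_less less_imp_le)
    thus "\<exists>N. \<forall>m\<ge>N. \<forall>n\<ge>N. norm (e m - e n) < \<epsilon>" by blast
  qed
  then obtain p where ep: "e \<longlonglongrightarrow> p" using Cauchy_convergent_iff convergent_def by blast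
  have t1: "(\<lambda>n. norm (d - e n)) \<longlonglongrightarrow> norm (d - p)" by (intro tendsto_intros ep)
  have t2: "(\<lambda>n. norm (d - e n)) \<longlonglongrightarrow> \<delta>"
  proof (rule tendsto_sandwich[of "\<lambda>n. \<delta>" _ _ "\<lambda>n. \<delta> + a n"])
    show "\<forall>\<^sub>F n in sequentially. \<delta> \<le> norm (d - e n)" using low eM by simp
    show "\<forall>\<^sub>F n in sequentially. norm (d - e n) \<le> \<delta> + a n" using ed by (simp add: a_def less_imp_le)
    show "(\<lambda>n. \<delta>) \<longlonglongrightarrow> \<delta>" by simp
    show "(\<lambda>n. \<delta> + a n) \<longlonglongrightarrow> \<delta>"
      using tendsto_add[OF tendsto_const[of \<delta>] LIMSEQ_inverse_real_of_nat] by (simp add: a_def)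
  qed
  have nd: "norm (d - p) = \<delta>" using LIMSEQ_unique[OF t1 t2] .
  have orth: "ip z (d - p) = 0" if zM: "z \<in> M" for z
  proof (rule orth_from_min)
    fix t
    have "(\<lambda>n. norm (d - (e n + sc t z))) \<longlonglongrightarrow> norm (d - (p + sc t z))" by (intro tendsto_intros ep)
    moreover have "\<forall>n. \<delta> \<le> norm (d - (e n + sc t z))"
      using low V.subspace_add[OF M eM V.subspace_scale[OF M zM]] by blast
    ultimately have "\<delta> \<le> norm (d - (p + sc t z))" by (meson LIMSEQ_le_const)
    thus "norm (d - p) \<le> norm (d - p - sc t z)" using nd by (simp add: diff_diff_eq)
  qed
  show ?thesis using eM ep orth by blast
qed

end



context chs begin

lemma tendsto_sc: assumes "X \<longlonglongrightarrow> x" shows "(\<lambda>n. sc c (X n)) \<longlonglongrightarrow> sc c x"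
proof -
  have "(\<lambda>n. norm (X n - x)) \<longlonglongrightarrow> 0" using assms by (simp add: LIM_zero tendsto_norm_zero)
  hence "(\<lambda>n. cmod c * norm (X n - x)) \<longlonglongrightarrow> 0" using tendsto_mult_right_zero by blast
  hence "(\<lambda>n. norm (sc c (X n) - sc c x)) \<longlonglongrightarrow> 0" by (simp add: V.scale_right_diff_distrib[symmetric] norm_sc)
  hence "(\<lambda>n. sc c (X n) - sc c x) \<longlonglongrightarrow> 0" by (rule tendsto_norm_zero_cancel)
  thus ?thesis by (rule LIM_zero_cancel)
qed

lemma subspace_closure: assumes M: "V.subspace M" shows "V.subspace (closure M)"
proof (rule V.subspaceI)
  show "0 \<in> closure M" using V.subspace_0[OF M] closure_subset by blast
next
  fix x y assume "x \<in> closure M" "y \<in> closure M"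
  then obtain X Y where X: "\<forall>n. X n \<in> M" "X \<longlonglongrightarrow> x" and Y: "\<forall>n. Y n \<in> M" "Y \<longlonglongrightarrow> y"
    by (meson closure_sequential)
  have "\<forall>n. X n + Y n \<in> M" using X Y V.subspace_add[OF M] by blast
  moreover have "(\<lambda>n. X n + Y n) \<longlonglongrightarrow> x + y" using X Y by (intro tendsto_intros)
  ultimately show "x + y \<in> closure M" by (meson closure_sequential)
next
  fix c x assume "x \<in> closure M"
  then obtain X where X: "\<forall>n. X n \<in> M" "X \<longlonglongrightarrow> x" by (meson closure_sequential)
  have "\<forall>n. sc c (X n) \<in> M" using X V.subspace_scale[OF M] by blast
  moreover have "(\<lambda>n. sc c (X n)) \<longlonglongrightarrow> sc c x" using X tendsto_sc by blast
  ultimately show "sc c x \<in> closure M" by (meson closure_sequential)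
qed

end




locale plha = chs sc ip for sc :: "complex \<Rightarrow> 'h::banach \<Rightarrow> 'h" and ip :: "'h \<Rightarrow> 'h \<Rightarrow> complex" +
  fixes mul :: "'h \<Rightarrow> 'h \<Rightarrow> 'h" and S :: "'h \<Rightarrow> 'h" and A :: "'h set"
  assumes P: "pseudo_left_hilbert_algebra sc ip mul S A"
begin

lemma subA: "V.subspace A" using P unfolding pseudo_left_hilbert_algebra_def by blast
lemma Pc: "\<forall>x\<in>A. \<forall>y\<in>A. mul x y \<in> A" "\<forall>x\<in>A. \<forall>y\<in>A. \<forall>z\<in>A. mul (mul x y) z = mul x (mul y z)"
  "\<forall>x\<in>A. \<exists>K. \<forall>y\<in>A. norm (mul x y) \<le> K * norm y"
  using P unfolding pseudo_left_hilbert_algebra_def by auto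
lemma mul_in: "x \<in> A \<Longrightarrow> y \<in> A \<Longrightarrow> mul x y \<in> A" using Pc(1) by blast
lemma assoc: "x \<in> A \<Longrightarrow> y \<in> A \<Longrightarrow> z \<in> A \<Longrightarrow> mul (mul x y) z = mul x (mul y z)"
  using Pc(2) by blast
lemma distl: "x \<in> A \<Longrightarrow> y \<in> A \<Longrightarrow> z \<in> A \<Longrightarrow> mul (x + y) z = mul x z + mul y z"
  using P unfolding pseudo_left_hilbert_algebra_def by blast
lemma distr: "x \<in> A \<Longrightarrow> y \<in> A \<Longrightarrow> z \<in> A \<Longrightarrow> mul x (y + z) = mul x y + mul x z"
  using P unfolding pseudo_left_hilbert_algebra_def by blast
lemma mul_scr: "x \<in> A \<Longrightarrow> y \<in> A \<Longrightarrow> mul x (sc c y) = sc c (mul x y)"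
  using P unfolding pseudo_left_hilbert_algebra_def by blast
lemma S_in: "x \<in> A \<Longrightarrow> S x \<in> A" using P unfolding pseudo_left_hilbert_algebra_def by blast
lemma S_add: "x \<in> A \<Longrightarrow> y \<in> A \<Longrightarrow> S (x + y) = S x + S y" using P unfolding pseudo_left_hilbert_algebra_def by blast
lemma S_sc: "x \<in> A \<Longrightarrow> S (sc c x) = sc (cnj c) (S x)" using P unfolding pseudo_left_hilbert_algebra_def by blast
lemma S_mul: "x \<in> A \<Longrightarrow> y \<in> A \<Longrightarrow> S (mul x y) = mul (S y) (S x)" using P unfolding pseudo_left_hilbert_algebra_def by blast
lemma bnd: "x \<in> A \<Longrightarrow> \<exists>K\<ge>0. \<forall>y\<in>A. norm (mul x y) \<le> K * norm y"
proof -
  assume "x \<in> A"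
  then obtain K where K: "\<forall>y\<in>A. norm (mul x y) \<le> K * norm y" using Pc(3) by blast
  have "\<forall>y\<in>A. norm (mul x y) \<le> max K 0 * norm y"
    using K by (meson max.cobounded1 mult_right_mono norm_ge_zero order.trans)
  thus ?thesis by (intro exI[of _ "max K 0"]) auto
qed
lemma adj: "x \<in> A \<Longrightarrow> y \<in> A \<Longrightarrow> z \<in> A \<Longrightarrow> ip (mul x y) z = ip y (mul (S x) z)"
  using P unfolding pseudo_left_hilbert_algebra_def by blast

definition "A2 = alg_square sc mul A"
lemma A2_span: "A2 = V.span {mul x y | x y. x \<in> A \<and> y \<in> A}" by (simp add: A2_def alg_square_def)
lemma subA2: "V.subspace A2" by (simp add: A2_span)
lemma A2_sub: "A2 \<subseteq> A" unfolding A2_span by (rule V.span_minimal) (auto intro: mul_in subA)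
lemma gen_A2: "x \<in> A \<Longrightarrow> y \<in> A \<Longrightarrow> mul x y \<in> A2" unfolding A2_span by (rule V.span_base) blast

lemma mul_diff: "x \<in> A \<Longrightarrow> y \<in> A \<Longrightarrow> z \<in> A \<Longrightarrow> mul x (y - z) = mul x y - mul x z"
  using distr[of x "y - z" z] V.subspace_diff[OF subA] by (simp add: eq_diff_eq)
lemma mul_0l: "y \<in> A \<Longrightarrow> mul 0 y = 0" using distl[of 0 0 y] V.subspace_0[OF subA] by simp
lemma mul_0r: "x \<in> A \<Longrightarrow> mul x 0 = 0" using distr[of x 0 0] V.subspace_0[OF subA] by simp

lemma seq_zero:
  assumes x: "x \<in> A" and orth: "\<forall>z\<in>A2. ip z \<eta> = 0" and sA: "\<forall>n. s n \<in> A" and st: "s \<longlonglongrightarrow> \<eta>"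
  shows "(\<lambda>n. mul x (s n)) \<longlonglongrightarrow> 0"
proof -
  obtain K1 where K1: "K1 \<ge> 0" "\<forall>y\<in>A. norm (mul x y) \<le> K1 * norm y" using bnd[OF x] by blast
  obtain K2 where K2: "K2 \<ge> 0" "\<forall>y\<in>A. norm (mul (S x) y) \<le> K2 * norm y" using bnd[OF S_in[OF x]] by blast
  define g where "g = (\<lambda>n. sqrt (norm (s n - \<eta>) * (K2 * K1) * (norm \<eta> + norm (s n - \<eta>))))"
  have bound: "norm (mul x (s n)) \<le> g n" for n
  proof -
    define w where "w = mul (S x) (mul x (s n))"
    have wA2: "w \<in> A2" unfolding w_def by (rule gen_A2[OF S_in[OF x] mul_in[OF x sA[rule_format]]])
    have ie: "ip \<eta> w = 0" using orth wA2 ip_sym[of w \<eta>] by simp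
    have "(norm (mul x (s n)))\<^sup>2 = Re (ip (mul x (s n)) (mul x (s n)))" by (simp add: ip_self)
    also have "\<dots> = Re (ip (s n) w)" using adj[OF x sA[rule_format] mul_in[OF x sA[rule_format]]] by (simp add: w_def)
    also have "\<dots> = Re (ip (s n - \<eta>) w)" by (simp add: ip_diff_left ie)
    also have "\<dots> \<le> cmod (ip (s n - \<eta>) w)" by (rule complex_Re_le_cmod)
    also have "\<dots> \<le> norm (s n - \<eta>) * norm w" by (rule CS)
    also have "\<dots> \<le> norm (s n - \<eta>) * (K2 * K1 * norm (s n))"
    proof -
      have "norm w \<le> K2 * norm (mul x (s n))" using K2 mul_in[OF x sA[rule_format]] by (simp add: w_def)
      also have "\<dots> \<le> K2 * (K1 * norm (s n))"
      proof -
        have "norm (mul x (s n)) \<le> K1 * norm (s n)" using K1(2) sA by blast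
        thus ?thesis using K2(1) by (rule mult_left_mono)
      qed
      finally have "norm w \<le> K2 * K1 * norm (s n)" by (simp only: mult.assoc)
      thus ?thesis by (rule mult_left_mono) simp
    qed
    also have "\<dots> \<le> norm (s n - \<eta>) * (K2 * K1) * (norm \<eta> + norm (s n - \<eta>))"
    proof -
      have "norm (s n) \<le> norm \<eta> + norm (s n - \<eta>)" by (metis add.commute diff_add_cancel norm_triangle_ineq)
      hence "K2 * K1 * norm (s n) \<le> K2 * K1 * (norm \<eta> + norm (s n - \<eta>))"
        using K1(1) K2(1) by (intro mult_left_mono) auto
      hence "norm (s n - \<eta>) * (K2 * K1 * norm (s n)) \<le> norm (s n - \<eta>) * (K2 * K1 * (norm \<eta> + norm (s n - \<eta>)))"
        by (rule mult_left_mono) simp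
      thus ?thesis by (simp only: mult.assoc)
    qed
    finally have "(norm (mul x (s n)))\<^sup>2 \<le> norm (s n - \<eta>) * (K2 * K1) * (norm \<eta> + norm (s n - \<eta>))" .
    hence "sqrt ((norm (mul x (s n)))\<^sup>2) \<le> g n" unfolding g_def by (rule real_sqrt_le_mono)
    thus ?thesis by simp
  qed
  have t0: "(\<lambda>n. norm (s n - \<eta>)) \<longlonglongrightarrow> 0" using st by (simp add: LIM_zero tendsto_norm_zero)
  have "(\<lambda>n. norm (s n - \<eta>) * (K2 * K1) * (norm \<eta> + norm (s n - \<eta>))) \<longlonglongrightarrow> 0 * (K2 * K1) * (norm \<eta> + 0)"
    by (rule tendsto_mult[OF tendsto_mult[OF t0 tendsto_const] tendsto_add[OF tendsto_const t0]])
  hence lim: "(\<lambda>n. norm (s n - \<eta>) * (K2 * K1) * (norm \<eta> + norm (s n - \<eta>))) \<longlonglongrightarrow> 0"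
    by (simp only: mult_zero_left)
  have "g \<longlonglongrightarrow> sqrt 0" unfolding g_def by (rule tendsto_real_sqrt[OF lim])
  hence g0: "g \<longlonglongrightarrow> 0" by (simp only: real_sqrt_zero)
  have ev: "\<forall>\<^sub>F n in sequentially. norm (mul x (s n)) \<le> g n" using bound by (intro always_eventually) blast
  show ?thesis by (rule Lim_null_comparison[OF ev g0])
qed

lemma left_zero:
  assumes x: "x \<in> A" and orth: "\<forall>z\<in>A2. ip z \<eta> = 0" and eA: "\<eta> \<in> A"
  shows "mul x \<eta> = 0"
proof -
  have "(\<lambda>n. mul x \<eta>) \<longlonglongrightarrow> 0" using seq_zero[OF x orth, of "\<lambda>n. \<eta>"] eA by simp
  thus ?thesis by (simp add: LIMSEQ_const_iff)
qed

lemma right_zero: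
  assumes x: "x \<in> A" and orth: "\<forall>z\<in>A2. ip z \<eta> = 0" and eA: "\<eta> \<in> A"
  shows "mul \<eta> x = 0"
proof -
  have z: "mul (S \<eta>) \<eta> = 0" by (rule left_zero[OF S_in[OF eA] orth eA])
  have "complex_of_real ((norm (mul \<eta> x))\<^sup>2) = ip (mul \<eta> x) (mul \<eta> x)" by (simp add: ip_self)
  also have "\<dots> = ip x (mul (S \<eta>) (mul \<eta> x))" by (rule adj[OF eA x mul_in[OF eA x]])
  also have "\<dots> = ip x (mul (mul (S \<eta>) \<eta>) x)" by (simp add: assoc[OF S_in[OF eA] eA x])
  also have "\<dots> = 0" by (simp add: z mul_0l[OF x])
  finally show ?thesis by simp
qed

lemma lme_zero:
  assumes x: "x \<in> A" and orth: "\<forall>z\<in>A2. ip z \<eta> = 0" and ec: "\<eta> \<in> closure A"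
  shows "left_mult_ext mul A x \<eta> = 0"
  unfolding left_mult_ext_def
proof (rule the_equality)
  show "\<forall>s. (\<forall>n. s n \<in> A) \<and> s \<longlonglongrightarrow> \<eta> \<longrightarrow> (\<lambda>n. mul x (s n)) \<longlonglongrightarrow> 0"
    using seq_zero[OF x orth] by blast
next
  fix z assume H: "\<forall>s. (\<forall>n. s n \<in> A) \<and> s \<longlonglongrightarrow> \<eta> \<longrightarrow> (\<lambda>n. mul x (s n)) \<longlonglongrightarrow> z"
  obtain s where s: "\<forall>n. s n \<in> A" "s \<longlonglongrightarrow> \<eta>" using ec closure_sequential by blast
  have "(\<lambda>n. mul x (s n)) \<longlonglongrightarrow> z" using H s by blast
  moreover have "(\<lambda>n. mul x (s n)) \<longlonglongrightarrow> 0" using seq_zero[OF x orth s(1) s(2)] .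
  ultimately show "z = 0" by (rule LIMSEQ_unique)
qed

end



context plha begin

lemma approx:
  assumes x: "x \<in> A" and d: "d \<in> A"
  shows "mul x d \<in> closure {mul x e | e. e \<in> A2}"
proof -
  obtain e p where eM: "\<forall>n. e n \<in> A2" and ep: "e \<longlonglongrightarrow> p" and orth: "\<forall>z\<in>A2. ip z (d - p) = 0"
    using projection[OF subA2, of d] by blast
  define s where "s = (\<lambda>n. d - e n)"
  have eA: "\<And>n. e n \<in> A" using eM A2_sub by blast
  have sA: "\<forall>n. s n \<in> A" using V.subspace_diff[OF subA d eA] by (simp add: s_def)
  have st: "s \<longlonglongrightarrow> d - p" unfolding s_def by (intro tendsto_intros ep)
  have z: "(\<lambda>n. mul x (s n)) \<longlonglongrightarrow> 0" by (rule seq_zero[OF x orth sA st])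
  have eq: "\<And>n. mul x (e n) = mul x d - mul x (s n)"
    using mul_diff[OF x d eA] by (simp add: s_def)
  have "(\<lambda>n. mul x d - mul x (s n)) \<longlonglongrightarrow> mul x d - 0" by (intro tendsto_diff tendsto_const z)
  hence "(\<lambda>n. mul x (e n)) \<longlonglongrightarrow> mul x d" by (simp add: eq)
  moreover have "\<forall>n. mul x (e n) \<in> {mul x e | e. e \<in> A2}" using eM by blast
  ultimately show ?thesis by (meson closure_sequential)
qed

definition "A4 = alg_square sc mul A2"
lemma A4_span: "A4 = V.span {mul x y | x y. x \<in> A2 \<and> y \<in> A2}" by (simp add: A4_def alg_square_def)
lemma clA4_sub: "V.subspace (closure A4)" unfolding A4_span by (rule subspace_closure) simp
lemma gen_A4: "x \<in> A2 \<Longrightarrow> y \<in> A2 \<Longrightarrow> mul x y \<in> A4" unfolding A4_span by (rule V.span_base) blast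

lemma mul_A2_clA4:
  assumes x: "x \<in> A"
  shows "e \<in> A2 \<Longrightarrow> mul x e \<in> closure A4"
proof -
  define T where "T = {e \<in> A. mul x e \<in> closure A4}"
  have "V.subspace T"
  proof (rule V.subspaceI)
    show "0 \<in> T" using V.subspace_0[OF subA] V.subspace_0[OF clA4_sub] mul_0r[OF x] by (simp add: T_def)
  next
    fix a b assume "a \<in> T" "b \<in> T"
    thus "a + b \<in> T" using V.subspace_add[OF subA] V.subspace_add[OF clA4_sub] distr[OF x]
      by (simp add: T_def)
  next
    fix c a assume "a \<in> T"
    thus "sc c a \<in> T" using V.subspace_scale[OF subA] V.subspace_scale[OF clA4_sub] mul_scr[OF x]
      by (simp add: T_def)
  qed
  moreover have "{mul c d | c d. c \<in> A \<and> d \<in> A} \<subseteq> T"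
  proof
    fix y assume "y \<in> {mul c d | c d. c \<in> A \<and> d \<in> A}"
    then obtain c d where c: "c \<in> A" and d: "d \<in> A" and y: "y = mul c d" by blast
    have xc: "mul x c \<in> A" by (rule mul_in[OF x c])
    have "mul x y = mul (mul x c) d" using assoc[OF x c d] y by simp
    also have "\<dots> \<in> closure {mul (mul x c) e | e. e \<in> A2}" by (rule approx[OF xc d])
    also have "\<dots> \<subseteq> closure A4"
    proof (rule closure_mono)
      show "{mul (mul x c) e | e. e \<in> A2} \<subseteq> A4" using gen_A4 gen_A2[OF x c] by blast
    qed
    finally show "y \<in> T" using mul_in[OF c d] y by (simp add: T_def)
  qed
  ultimately have "A2 \<subseteq> T" unfolding A2_span by (rule V.span_minimal[rotated])
  thus "e \<in> A2 \<Longrightarrow> mul x e \<in> closure A4" by (auto simp: T_def)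
qed

lemma A2_dense: "A2 \<subseteq> closure A4"
  unfolding A2_span
proof (rule V.span_minimal[OF _ clA4_sub])
  show "{mul x y | x y. x \<in> A \<and> y \<in> A} \<subseteq> closure A4"
  proof
    fix z assume "z \<in> {mul x y | x y. x \<in> A \<and> y \<in> A}"
    then obtain x y where x: "x \<in> A" and y: "y \<in> A" and z: "z = mul x y" by blast
    have "mul x y \<in> closure {mul x e | e. e \<in> A2}" by (rule approx[OF x y])
    also have "\<dots> \<subseteq> closure (closure A4)"
      by (rule closure_mono) (use mul_A2_clA4[OF x] in blast)
    finally show "z \<in> closure A4" using z by simp
  qed
qed

lemma S_A2: "x \<in> A2 \<Longrightarrow> S x \<in> A2"
proof -
  define T where "T = {e \<in> A. S e \<in> A2}"
  have S0: "S 0 = 0" using S_add[of 0 0] V.subspace_0[OF subA] by simp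
  have "V.subspace T"
  proof (rule V.subspaceI)
    show "0 \<in> T" using V.subspace_0[OF subA] V.subspace_0[OF subA2] S0 by (simp add: T_def)
  next
    fix a b assume "a \<in> T" "b \<in> T"
    thus "a + b \<in> T" using V.subspace_add[OF subA] V.subspace_add[OF subA2] S_add
      by (simp add: T_def)
  next
    fix c a assume "a \<in> T"
    thus "sc c a \<in> T" using V.subspace_scale[OF subA] V.subspace_scale[OF subA2] S_sc
      by (simp add: T_def)
  qed
  moreover have "{mul c d | c d. c \<in> A \<and> d \<in> A} \<subseteq> T"
    using S_mul gen_A2 S_in mul_in by (auto simp: T_def)
  ultimately have "A2 \<subseteq> T" unfolding A2_span by (rule V.span_minimal[rotated])
  thus "x \<in> A2 \<Longrightarrow> S x \<in> A2" by (auto simp: T_def)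
qed

lemma closable_A2: "closable_on A2 S"
proof -
  have c: "closable_on A S" using P unfolding pseudo_left_hilbert_algebra_def by auto
  have "closure ((\<lambda>a. (a, S a)) ` A2) \<subseteq> closure ((\<lambda>a. (a, S a)) ` A)"
    using A2_sub by (intro closure_mono image_mono)
  thus ?thesis using c unfolding closable_on_def by blast
qed

lemma pseudo_A2: "pseudo_left_hilbert_algebra sc ip mul S A2"
proof -
  have P': "(\<forall>x\<in>A. \<forall>y\<in>A. \<forall>z\<in>A. mul (x + y) z = mul x z + mul y z \<and> mul x (y + z) = mul x y + mul x z) \<and>
     (\<forall>c. \<forall>x\<in>A. \<forall>y\<in>A. mul (sc c x) y = sc c (mul x y) \<and> mul x (sc c y) = sc c (mul x y)) \<and>
     (\<forall>x\<in>A. S x \<in> A \<and> S (S x) = x) \<and>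
     (\<forall>x\<in>A. \<forall>y\<in>A. S (x + y) = S x + S y) \<and>
     (\<forall>c. \<forall>x\<in>A. S (sc c x) = sc (cnj c) (S x)) \<and>
     (\<forall>x\<in>A. \<forall>y\<in>A. S (mul x y) = mul (S y) (S x)) \<and>
     (\<forall>x\<in>A. \<forall>y\<in>A. \<forall>z\<in>A. ip (mul x y) z = ip y (mul (S x) z))"
    using P unfolding pseudo_left_hilbert_algebra_def by auto
  have bndA2: "\<forall>x\<in>A2. \<exists>K. \<forall>y\<in>A2. norm (mul x y) \<le> K * norm y"
    using bnd A2_sub by blast
  show ?thesis unfolding pseudo_left_hilbert_algebra_def
  proof (intro conjI)
    show "complex_hilbert sc ip" by (rule CH)
    show "V.subspace A2" by (rule subA2)
    show "\<forall>x\<in>A2. \<forall>y\<in>A2. mul x y \<in> A2" using gen_A2 A2_sub by blast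
    show "\<forall>x\<in>A2. \<forall>y\<in>A2. \<forall>z\<in>A2. mul (mul x y) z = mul x (mul y z)" using assoc A2_sub by blast
    show "\<forall>x\<in>A2. S x \<in> A2 \<and> S (S x) = x" using S_A2 P' A2_sub by blast
    show "\<forall>x\<in>A2. \<exists>K. \<forall>y\<in>A2. norm (mul x y) \<le> K * norm y" by (rule bndA2)
    show "closable_on A2 S" by (rule closable_A2)
  qed (use P' A2_sub in blast)+
qed

lemma lha_A2: "left_hilbert_algebra sc ip mul S A2"
  unfolding left_hilbert_algebra_def
proof
  show "pseudo_left_hilbert_algebra sc ip mul S A2" by (rule pseudo_A2)
  have "closure A2 \<subseteq> closure (closure A4)" by (rule closure_mono[OF A2_dense])
  thus "closure A2 \<subseteq> closure (alg_square sc mul A2)" by (simp add: A4_def)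
qed

end

theorem mainTheorem1:
  fixes sc :: "complex \<Rightarrow> 'h::banach \<Rightarrow> 'h"
    and ip :: "'h \<Rightarrow> 'h \<Rightarrow> complex"
    and mul :: "'h \<Rightarrow> 'h \<Rightarrow> 'h"
    and S :: "'h \<Rightarrow> 'h"
    and A :: "'h set"
  assumes "pseudo_left_hilbert_algebra sc ip mul S A"
  shows "left_hilbert_algebra sc ip mul S (alg_square sc mul A) \<and>
    (\<forall>\<xi>\<in>A. \<forall>\<eta>\<in>closure A. (\<forall>\<zeta>\<in>alg_square sc mul A. ip \<zeta> \<eta> = 0) \<longrightarrow>
        left_mult_ext mul A \<xi> \<eta> = 0 \<and> (\<eta> \<in> A \<longrightarrow> mul \<eta> \<xi> = 0))"
proof -
  have ch: "complex_hilbert sc ip" using assms unfolding pseudo_left_hilbert_algebra_def by blast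
  interpret plha sc ip mul S A by unfold_locales (fact ch, fact assms)
  show ?thesis
    using lha_A2 lme_zero right_zero unfolding A2_def by blast
qed


end
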